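(* For every real $u<1$ with $u\neq0$, $$\sum_{k=0}^\infty\frac{u^k}{2k+1}\left(\left(1-i\sqrt{1-u}\right)^{-2k-1}+\left(1+i\sqrt{1-u}\right)^{-2k-1}\right)=\frac{\operatorname{arctanh}\sqrt u}{\sqrt u}.$$
   Context: Here $i=\sqrt{-1}$ and $\sqrt{1-u}>0$. The right-hand side is the even function $\frac{\operatorname{arctanh}\sqrt u}{\sqrt u}=\sum_{k\ge0}\frac{u^k}{2k+1}$; for $0<u<1$ it is the real value with $\sqrt u>0$, and for $u<0$ it equals $\frac{\arctan\sqrt{|u|}}{\sqrt{|u|}}$. *)

theory Defs
  imports Complex_Main
begin

text \<open>Right-hand side: the real-valued function artanh(sqrt u)/sqrt u, read as
  arctan(sqrt |u|)/sqrt |u| for u < 0 (value 1 at u = 0, unused).\<close>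
definition artanh_ratio :: "real \<Rightarrow> real" where
  "artanh_ratio u =
     (if u > 0 then artanh (sqrt u) / sqrt u
      else if u < 0 then arctan (sqrt (- u)) / sqrt (- u)
      else 1)"

end

theory Submission imports Defs "HOL-Analysis.Analysis" begin

lemma Re_moeb_pos:
  fixes x :: complex assumes "norm x < 1"
  shows "0 < Re ((1 - \<i> * x) / (1 + \<i> * x))" and "1 + \<i> * x \<noteq> 0" and "1 - \<i> * x \<noteq> 0"
proof -
  show nz: "1 + \<i> * x \<noteq> 0"
  proof
    assume "1 + \<i> * x = 0"
    moreover have "x = \<i> - \<i> * (1 + \<i> * x)" by (simp add: algebra_simps)
    ultimately have "x = \<i>" by simp
    then show False using assms by simp
  qed
  show "1 - \<i> * x \<noteq> 0"
  proof
    assume "1 - \<i> * x = 0"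
    moreover have "x = \<i> * (1 - \<i> * x) - \<i>" by (simp add: algebra_simps)
    ultimately have "x = -\<i>" by simp
    then show False using assms by simp
  qed
  have "(norm x)^2 = (Re x)^2 + (Im x)^2" by (simp add: cmod_power2)
  moreover have "(norm x)^2 < 1" using assms by (simp add: abs_square_less_1)
  ultimately have h: "(Re x)^2 + (Im x)^2 < 1" by simp
  have d: "0 < (Re (1 + \<i> * x))^2 + (Im (1 + \<i> * x))^2" using nz
    by (simp only: complex_neq_0)
  have "Re ((1 - \<i> * x) / (1 + \<i> * x)) = (1 - (Re x)^2 - (Im x)^2) / ((Re (1 + \<i> * x))^2 + (Im (1 + \<i> * x))^2)"
    by (simp add: Re_divide power2_eq_square algebra_simps)
  then show "0 < Re ((1 - \<i> * x) / (1 + \<i> * x))" using h d by simp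
qed

lemma Arctan_add:
  fixes x y :: complex assumes "norm x < 1" "norm y < 1"
  shows "Arctan x + Arctan y = (\<i>/2) * Ln (((1 - \<i> * x) / (1 + \<i> * x)) * ((1 - \<i> * y) / (1 + \<i> * y)))"
proof -
  note X = Re_moeb_pos[OF assms(1)] and Y = Re_moeb_pos[OF assms(2)]
  have bx: "\<bar>Im (Ln ((1 - \<i> * x) / (1 + \<i> * x)))\<bar> < pi/2" by (rule Re_Ln_pos_lt_imp[OF X(1)])
  have by': "\<bar>Im (Ln ((1 - \<i> * y) / (1 + \<i> * y)))\<bar> < pi/2" by (rule Re_Ln_pos_lt_imp[OF Y(1)])
  have "Ln (((1 - \<i> * x) / (1 + \<i> * x)) * ((1 - \<i> * y) / (1 + \<i> * y)))
      = Ln ((1 - \<i> * x) / (1 + \<i> * x)) + Ln ((1 - \<i> * y) / (1 + \<i> * y))"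
    by (rule Ln_times_simple) (use X Y bx by' in auto)
  then show ?thesis unfolding Arctan_def by (simp add: algebra_simps)
qed

lemma key:
  fixes v c :: complex
  assumes v0: "v \<noteq> 0" and nx: "norm (v / (1 - \<i> * c)) < 1" and ny: "norm (v / (1 + \<i> * c)) < 1"
    and vs: "v^2 = c^2 - 1" and a0: "1 - \<i> * c \<noteq> 0" and b0: "1 + \<i> * c \<noteq> 0"
  shows "(\<lambda>k::nat. (-(v^2))^k / of_nat (2*k+1) * (inverse ((1 - \<i> * c)^(2*k+1)) + inverse ((1 + \<i> * c)^(2*k+1))))
           sums (Arctan v / v)"
proof -
  define a where "a = 1 - \<i> * c"
  define b where "b = 1 + \<i> * c"
  have a0': "a \<noteq> 0" and b0': "b \<noteq> 0" using a0 b0 by (auto simp: a_def b_def)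
  note X = Re_moeb_pos[OF nx[folded a_def]] and Y = Re_moeb_pos[OF ny[folded b_def]]
  have s1: "(\<lambda>k. (-1)^k / of_nat (2*k+1) * (v/a)^(2*k+1)) sums Arctan (v/a)"
    using Arctan_series(2)[OF nx[folded a_def]] by simp
  have s2: "(\<lambda>k. (-1)^k / of_nat (2*k+1) * (v/b)^(2*k+1)) sums Arctan (v/b)"
    using Arctan_series(2)[OF ny[folded b_def]] by simp
  have s3: "(\<lambda>k. ((-1)^k / of_nat (2*k+1) * (v/a)^(2*k+1) + (-1)^k / of_nat (2*k+1) * (v/b)^(2*k+1)) / v)
      sums ((Arctan (v/a) + Arctan (v/b)) / v)"
    by (intro sums_divide sums_add s1 s2)
  have "a + \<i> * v = a * (1 + \<i> * (v/a))" using a0' by (simp add: distrib_left)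
  then have ia: "a + \<i> * v \<noteq> 0" using X(2) a0' by simp
  have "b + \<i> * v = b * (1 + \<i> * (v/b))" using b0' by (simp add: distrib_left)
  then have ib: "b + \<i> * v \<noteq> 0" using Y(2) b0' by simp
  have iv: "1 + \<i> * v \<noteq> 0"
  proof
    assume h: "1 + \<i> * v = 0"
    have "(a + \<i> * v) * (b + \<i> * v) = 2 * (1 + \<i> * v)"
      using vs unfolding a_def b_def by (simp add: algebra_simps power2_eq_square)
    then show False using h ia ib by simp
  qed
  have P: "(1 - \<i> * (v/a)) / (1 + \<i> * (v/a)) = (a - \<i> * v) / (a + \<i> * v)"
  proof -
    have "(1 - \<i> * (v/a)) / (1 + \<i> * (v/a)) = (a * (1 - \<i> * (v/a))) / (a * (1 + \<i> * (v/a)))"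
      using a0' by (simp only: mult_divide_mult_cancel_left_if) simp
    also have "\<dots> = (a - \<i> * v) / (a + \<i> * v)" using a0' by (simp add: right_diff_distrib distrib_left)
    finally show ?thesis .
  qed
  have Q: "(1 - \<i> * (v/b)) / (1 + \<i> * (v/b)) = (b - \<i> * v) / (b + \<i> * v)"
  proof -
    have "(1 - \<i> * (v/b)) / (1 + \<i> * (v/b)) = (b * (1 - \<i> * (v/b))) / (b * (1 + \<i> * (v/b)))"
      using b0' by (simp only: mult_divide_mult_cancel_left_if) simp
    also have "\<dots> = (b - \<i> * v) / (b + \<i> * v)" using b0' by (simp add: right_diff_distrib distrib_left)
    finally show ?thesis .
  qed
  have e1: "(a - \<i> * v) * (b - \<i> * v) = 2 * (1 - \<i> * v)"
    using vs unfolding a_def b_def by (simp add: algebra_simps power2_eq_square)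
  have e2: "(a + \<i> * v) * (b + \<i> * v) = 2 * (1 + \<i> * v)"
    using vs unfolding a_def b_def by (simp add: algebra_simps power2_eq_square)
  have PQ: "((a - \<i> * v) / (a + \<i> * v)) * ((b - \<i> * v) / (b + \<i> * v)) = (1 - \<i> * v) / (1 + \<i> * v)"
    by (simp only: times_divide_times_eq e1 e2 mult_divide_mult_cancel_left_if) simp
  have sumA: "Arctan (v/a) + Arctan (v/b) = Arctan v"
  proof -
    have "Arctan (v/a) + Arctan (v/b) = (\<i>/2) * Ln ((1 - \<i> * v) / (1 + \<i> * v))"
      using Arctan_add[OF nx[folded a_def] ny[folded b_def]] unfolding P Q PQ .
    also have "\<dots> = Arctan v" by (simp add: Arctan_def)
    finally show ?thesis .
  qed
  have terms: "((-1)^k / of_nat (2*k+1) * (v/a)^(2*k+1) + (-1)^k / of_nat (2*k+1) * (v/b)^(2*k+1)) / v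
     = (-(v^2))^k / of_nat (2*k+1) * (inverse (a^(2*k+1)) + inverse (b^(2*k+1)))" for k
  proof -
    have "v^(2*k+1) = v * (v^2)^k" by (simp add: power_mult)
    moreover have "(-(v^2))^k = (-1)^k * (v^2)^k" by (simp add: power_mult_distrib[symmetric])
    moreover have vv: "v * (c * (inverse v * d)) = c * d" for c d using v0 by (simp add: field_simps)
    ultimately show ?thesis using v0 by (simp add: power_divide divide_inverse algebra_simps power_inverse vv)
  qed
  have s4: "(\<lambda>k::nat. (-(v^2))^k / of_nat (2*k+1) * (inverse (a^(2*k+1)) + inverse (b^(2*k+1)))) sums (Arctan v / v)"
    using s3 unfolding terms sumA .
  then show ?thesis unfolding a_def b_def .
qed

lemma norm_1i:
  fixes t :: real
  shows "norm (1 - \<i> * of_real t) = sqrt (1 + t^2)" and "norm (1 + \<i> * of_real t) = sqrt (1 + t^2)"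
proof -
  have "1 - \<i> * of_real t = Complex 1 (-t)" by (simp add: complex_eq_iff)
  then show "norm (1 - \<i> * of_real t) = sqrt (1 + t^2)" by (simp add: norm_complex_def)
  have "1 + \<i> * of_real t = Complex 1 t" by (simp add: complex_eq_iff)
  then show "norm (1 + \<i> * of_real t) = sqrt (1 + t^2)" by (simp add: norm_complex_def)
qed

lemma gen:
  fixes u :: real and v :: complex
  assumes u1: "u < 1" and v0: "v \<noteq> 0" and vu: "v^2 = - of_real u" and nv: "norm v < sqrt (2 - u)"
  shows "(\<lambda>k::nat. complex_of_real (u ^ k / (2 * real k + 1)) *
            (inverse ((1 - \<i> * complex_of_real (sqrt (1 - u))) ^ (2 * k + 1)) +
             inverse ((1 + \<i> * complex_of_real (sqrt (1 - u))) ^ (2 * k + 1))))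
         sums (Arctan v / v)"
proof -
  define c where "c = complex_of_real (sqrt (1 - u))"
  have c2: "c^2 = of_real (1 - u)" unfolding c_def using u1
    by (simp flip: of_real_power)
  have na: "norm (1 - \<i> * c) = sqrt (2 - u)" and nb: "norm (1 + \<i> * c) = sqrt (2 - u)"
    unfolding c_def norm_1i using u1 by simp_all
  have pos: "0 < sqrt (2 - u)" using u1 by simp
  have a0: "1 - \<i> * c \<noteq> 0" using na pos by auto
  have b0: "1 + \<i> * c \<noteq> 0" using nb pos by auto
  have nx: "norm (v / (1 - \<i> * c)) < 1" using na pos nv by (simp add: norm_divide)
  have ny: "norm (v / (1 + \<i> * c)) < 1" using nb pos nv by (simp add: norm_divide)
  have vs: "v^2 = c^2 - 1" using vu c2 by simp
  have "(\<lambda>k::nat. (-(v^2))^k / of_nat (2*k+1) * (inverse ((1 - \<i> * c)^(2*k+1)) + inverse ((1 + \<i> * c)^(2*k+1))))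
           sums (Arctan v / v)" by (rule key[OF v0 nx ny vs a0 b0])
  moreover have "complex_of_real (u ^ k / (2 * real k + 1)) = (-(v^2))^k / of_nat (2*k+1)" for k :: nat
  proof -
    have vu': "-(v^2) = of_real u" using vu by simp
    have "2 * real k + 1 = real (2*k+1)" by simp
    then have "complex_of_real (u ^ k / (2 * real k + 1)) = complex_of_real (u^k / real (2*k+1))" by (simp only:)
    also have "\<dots> = of_real u ^ k / of_nat (2*k+1)" by (simp only: of_real_divide of_real_power of_real_of_nat_eq)
    finally show ?thesis by (simp only: vu')
  qed
  ultimately show ?thesis unfolding c_def by (simp only:)
qed

theorem lemma5p1:
  fixes u :: real
  assumes "u < 1" and "u \<noteq> 0"
  shows "(\<lambda>k::nat. complex_of_real (u ^ k / (2 * real k + 1)) *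
            (inverse ((1 - \<i> * complex_of_real (sqrt (1 - u))) ^ (2 * k + 1)) +
             inverse ((1 + \<i> * complex_of_real (sqrt (1 - u))) ^ (2 * k + 1))))
         sums complex_of_real (artanh_ratio u)"
proof (cases "u < 0")
  case True
  define r where "r = sqrt (- u)"
  have r0: "0 < r" using True by (simp add: r_def)
  have "r < sqrt (2 - u)" unfolding r_def by simp
  then have "norm (complex_of_real r) < sqrt (2 - u)" using r0 by simp
  moreover have "(complex_of_real r)^2 = - of_real u" using True
    by (simp add: r_def flip: of_real_power)
  ultimately have S: "(\<lambda>k::nat. complex_of_real (u ^ k / (2 * real k + 1)) *
            (inverse ((1 - \<i> * complex_of_real (sqrt (1 - u))) ^ (2 * k + 1)) +
             inverse ((1 + \<i> * complex_of_real (sqrt (1 - u))) ^ (2 * k + 1)))) sums (Arctan (of_real r) / of_real r)"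
    by (intro gen) (use assms r0 in auto)
  have "Arctan (of_real r) / of_real r = complex_of_real (artanh_ratio u)"
    using True by (simp add: artanh_ratio_def Arctan_of_real r_def)
  then show ?thesis using S by simp
next
  case False
  then have up: "0 < u" using assms by simp
  define r where "r = sqrt u"
  have r0: "0 < r" using up by (simp add: r_def)
  have r1: "r < 1" using assms up by (simp add: r_def)
  have "r < sqrt (2 - u)" unfolding r_def using assms by simp
  then have "norm (\<i> * complex_of_real r) < sqrt (2 - u)" using r0 by (simp add: norm_mult)
  moreover have "(\<i> * complex_of_real r)^2 = - of_real u" using up
    by (simp add: r_def power_mult_distrib flip: of_real_power)
  moreover have "\<i> * complex_of_real r \<noteq> 0" using r0 by simp
  ultimately have S: "(\<lambda>k::nat. complex_of_real (u ^ k / (2 * real k + 1)) *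
            (inverse ((1 - \<i> * complex_of_real (sqrt (1 - u))) ^ (2 * k + 1)) +
             inverse ((1 + \<i> * complex_of_real (sqrt (1 - u))) ^ (2 * k + 1)))) sums (Arctan (\<i> * of_real r) / (\<i> * of_real r))"
    by (intro gen) (use assms in auto)
  have q: "(1 - \<i> * (\<i> * complex_of_real r)) / (1 + \<i> * (\<i> * complex_of_real r)) = of_real ((1 + r) / (1 - r))"
    by simp
  have "0 < (1 + r) / (1 - r)" using r0 r1 by simp
  then have L: "Ln (of_real ((1 + r) / (1 - r))) = of_real (ln ((1 + r) / (1 - r)))" by (rule Ln_of_real)
  have "Arctan (\<i> * of_real r) / (\<i> * of_real r) = of_real (ln ((1 + r) / (1 - r)) / 2 / r)"
    unfolding Arctan_def q L using r0 by (simp add: field_simps)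
  also have "\<dots> = complex_of_real (artanh_ratio u)"
    using up by (simp add: artanh_ratio_def artanh_def r_def)
  finally show ?thesis using S by simp
qed

end
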